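(* Let $E$ be a finite directed graph and let $A$ be $KE$ or $L_K(E)$ with its standard filtration $\mathcal{F}$. Let $t(A,\mathcal{F})=(\dim(A),\mathrm{GKdim}(A),\mathrm{h}_{\mathrm{alg}}(A))$. Then exactly one of the following holds: (1) $t(A,\mathcal{F})=(k,0,0)$ for some $k<\infty$; (2) $t(A,\mathcal{F})=(\infty,l,0)$ for some $l<\infty$; (3) $t(A,\mathcal{F})=(\infty,\infty,m)$ for some $m<\infty$.
   Context: A finite directed graph $E=(E^0,E^1,s,r)$ has finitely many vertices and edges, with source and range maps $s,r:E^1\to E^0$. Paths are finite sequences $e_1\cdots e_n$ of edges with $r(e_i)=s(e_{i+1})$; vertices are paths of length $0$. The path algebra $KE$ over a field $K$ has basis all paths with concatenation product (zero when not composable); its standard filtration $V_n$ is the span of paths of length $\le n$. The Leavitt path algebra $L_K(E)$ is the $K$-algebra generated by $E^0\cup E^1\cup\{e^*:e\in E^1\}$ subject to: $vw=\delta_{v,w}v$ for vertices; $s(e)e=e=er(e)$ and $r(e)e^*=e^*=e^*s(e)$; $e^*f=\delta_{e,f}r(e)$ for $e,f\in E^1$; $\sum_{s(e)=v}ee^*=v$ for every vertex $v$ with $0<|s^{-1}(v)|<\infty$. Its standard filtration $W_n$ is the span of elements $\lambda\mu^*$ with $\lambda,\mu$ paths and $l(\lambda)+l(\mu)\le n$. For a filtration $\{V_n\}$ of an algebra $A$, $\mathrm{h}_{\mathrm{alg}}(A)=0$ if $A$ is finite-dimensional and $\limsup_n\frac1n\log\dim(V_n/V_{n-1})$ otherwise.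 $\mathrm{GKdim}(A)=\limsup_{n}\log\dim(V^n)/\log n$ for a finite-dimensional generating subspace $V$, where $V^n$ is the span of products of at most $n$ elements of $V$. *)

theory Defs
  imports Complex_Main "HOL-Library.Poly_Mapping" "HOL-Library.Extended_Nat"
    "HOL-Library.Extended_Real" "Graph_Theory.Digraph"
begin

definition pm_scale :: "'k::field \<Rightarrow> ('w \<Rightarrow>\<^sub>0 'k) \<Rightarrow> ('w \<Rightarrow>\<^sub>0 'k)" where
  "pm_scale c p = Poly_Mapping.map (\<lambda>x. c * x) p"

abbreviation pspan :: "('w \<Rightarrow>\<^sub>0 'k::field) set \<Rightarrow> ('w \<Rightarrow>\<^sub>0 'k) set" where
  "pspan S \<equiv> module.span pm_scale S"

text \<open>Bilinear extension of a partial product on basis elements.\<close>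
definition pm_mult :: "('w \<Rightarrow> 'w \<Rightarrow> 'w option) \<Rightarrow> ('w \<Rightarrow>\<^sub>0 'k::field) \<Rightarrow> ('w \<Rightarrow>\<^sub>0 'k) \<Rightarrow> ('w \<Rightarrow>\<^sub>0 'k)" where
  "pm_mult m p q = (\<Sum>u\<in>Poly_Mapping.keys p. \<Sum>w\<in>Poly_Mapping.keys q.
      (case m u w of None \<Rightarrow> 0 | Some z \<Rightarrow> Poly_Mapping.single z (Poly_Mapping.lookup p u * Poly_Mapping.lookup q w)))"

text \<open>Dimension of the image of a set S in the quotient of the ambient space by a subspace M,
  i.e. the dimension of (span S + M)/M: the least cardinality of a finite subset of S whose
  span together with M covers S (infinity if there is none).\<close>
definition qdim :: "('w \<Rightarrow>\<^sub>0 'k::field) set \<Rightarrow> ('w \<Rightarrow>\<^sub>0 'k) set \<Rightarrow> enat" where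
  "qdim M S = (if \<exists>B. finite B \<and> B \<subseteq> S \<and> S \<subseteq> {b + x | b x. b \<in> pspan B \<and> x \<in> M}
     then enat (LEAST n. \<exists>B. finite B \<and> card B = n \<and> B \<subseteq> S \<and> S \<subseteq> {b + x | b x. b \<in> pspan B \<and> x \<in> M})
     else \<infinity>)"

text \<open>Logarithm of a dimension; log 0 is taken to be 0 (as Isabelle's ln does).\<close>
definition logdim :: "enat \<Rightarrow> ereal" where
  "logdim d = (case d of enat k \<Rightarrow> ereal (ln (real k)) | \<infinity> \<Rightarrow> \<infinity>)"

definition prods_upto :: "('a \<Rightarrow> 'a \<Rightarrow> 'a) \<Rightarrow> 'a set \<Rightarrow> nat \<Rightarrow> 'a set" where
  "prods_upto mult V n = {foldl mult (hd xs) (tl xs) | xs. xs \<noteq> [] \<and> length xs \<le> n \<and> set xs \<subseteq> V}"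

text \<open>The algebra A is the quotient C/I where C is a subspace (the carrier, closed under mult)
  of the ambient free vector space and I is an ideal of C; F n is a subspace of C whose
  image in A is the n-th filtration piece. (For the path algebra, I = {0}.)\<close>

definition alg_dim :: "('w \<Rightarrow>\<^sub>0 'k::field) set \<Rightarrow> ('w \<Rightarrow>\<^sub>0 'k) set \<Rightarrow> enat" where
  "alg_dim I C = qdim I C"

definition filt_prev :: "(nat \<Rightarrow> ('w \<Rightarrow>\<^sub>0 'k::field) set) \<Rightarrow> nat \<Rightarrow> ('w \<Rightarrow>\<^sub>0 'k) set" where
  "filt_prev F n = (if n = 0 then {0} else F (n - 1))"

text \<open>dim(F_n / F_(n-1)) computed inside A = C/I.\<close>
definition graded_dim :: "('w \<Rightarrow>\<^sub>0 'k::field) set \<Rightarrow> (nat \<Rightarrow> ('w \<Rightarrow>\<^sub>0 'k) set) \<Rightarrow> nat \<Rightarrow> enat" where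
  "graded_dim I F n = qdim (pspan (filt_prev F n \<union> I)) (F n)"

definition h_alg :: "('w \<Rightarrow>\<^sub>0 'k::field) set \<Rightarrow> ('w \<Rightarrow>\<^sub>0 'k) set \<Rightarrow> (nat \<Rightarrow> ('w \<Rightarrow>\<^sub>0 'k) set) \<Rightarrow> ereal" where
  "h_alg I C F = (if alg_dim I C \<noteq> \<infinity> then 0
     else limsup (\<lambda>n. logdim (graded_dim I F n) / ereal (real n)))"

text \<open>GK dimension computed with the finite-dimensional generating subspace V = F 1.\<close>
definition gk_dim :: "(('w \<Rightarrow>\<^sub>0 'k::field) \<Rightarrow> ('w \<Rightarrow>\<^sub>0 'k) \<Rightarrow> ('w \<Rightarrow>\<^sub>0 'k))
    \<Rightarrow> ('w \<Rightarrow>\<^sub>0 'k) set \<Rightarrow> ('w \<Rightarrow>\<^sub>0 'k) set \<Rightarrow> ereal" where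
  "gk_dim mult I V = limsup (\<lambda>n. logdim (qdim I (pspan (prods_upto mult V n))) / ereal (ln (real n)))"

definition alg_type :: "(('w \<Rightarrow>\<^sub>0 'k::field) \<Rightarrow> ('w \<Rightarrow>\<^sub>0 'k) \<Rightarrow> ('w \<Rightarrow>\<^sub>0 'k))
    \<Rightarrow> ('w \<Rightarrow>\<^sub>0 'k) set \<Rightarrow> ('w \<Rightarrow>\<^sub>0 'k) set \<Rightarrow> (nat \<Rightarrow> ('w \<Rightarrow>\<^sub>0 'k) set)
    \<Rightarrow> enat \<times> ereal \<times> ereal" where
  "alg_type mult I C F = (alg_dim I C, gk_dim mult I (F 1), h_alg I C F)"

text \<open>A path is encoded as (start vertex, list of edges); (v,[]) is the vertex v.\<close>
type_synonym ('v,'e) path = "'v \<times> 'e list"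

fun edges_chain :: "('v,'e) pre_digraph \<Rightarrow> 'v \<Rightarrow> 'e list \<Rightarrow> bool" where
  "edges_chain G v [] = True"
| "edges_chain G v (e # es) = (e \<in> arcs G \<and> tail G e = v \<and> edges_chain G (head G e) es)"

definition is_path :: "('v,'e) pre_digraph \<Rightarrow> ('v,'e) path \<Rightarrow> bool" where
  "is_path G p = (fst p \<in> verts G \<and> edges_chain G (fst p) (snd p))"

definition path_len :: "('v,'e) path \<Rightarrow> nat" where
  "path_len p = length (snd p)"

definition path_end :: "('v,'e) pre_digraph \<Rightarrow> ('v,'e) path \<Rightarrow> 'v" where
  "path_end G p = (if snd p = [] then fst p else head G (last (snd p)))"

definition path_cat :: "('v,'e) pre_digraph \<Rightarrow> ('v,'e) path \<Rightarrow> ('v,'e) path \<Rightarrow> ('v,'e) path option" where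
  "path_cat G p q = (if is_path G p \<and> is_path G q \<and> path_end G p = fst q
     then Some (fst p, snd p @ snd q) else None)"

definition KE_mult :: "('v,'e) pre_digraph \<Rightarrow> (('v,'e) path \<Rightarrow>\<^sub>0 'k::field) \<Rightarrow> _ \<Rightarrow> _" where
  "KE_mult G = pm_mult (path_cat G)"

definition KE_carrier :: "('v,'e) pre_digraph \<Rightarrow> (('v,'e) path \<Rightarrow>\<^sub>0 'k::field) set" where
  "KE_carrier G = pspan {Poly_Mapping.single p 1 | p. is_path G p}"

definition KE_filt :: "('v,'e) pre_digraph \<Rightarrow> nat \<Rightarrow> (('v,'e) path \<Rightarrow>\<^sub>0 'k::field) set" where
  "KE_filt G n = pspan {Poly_Mapping.single p 1 | p. is_path G p \<and> path_len p \<le> n}"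

definition path_alg_type :: "'k::field itself \<Rightarrow> ('v,'e) pre_digraph \<Rightarrow> enat \<times> ereal \<times> ereal" where
  "path_alg_type K G = alg_type (KE_mult G) ({0} :: (('v,'e) path \<Rightarrow>\<^sub>0 'k) set)
      (KE_carrier G) (KE_filt G)"

datatype ('v,'e) gen = GV 'v | GE 'e | GG 'e  \<comment> \<open>vertex, edge e, ghost edge e*\<close>

definition valid_gen :: "('v,'e) pre_digraph \<Rightarrow> ('v,'e) gen \<Rightarrow> bool" where
  "valid_gen G g = (case g of GV v \<Rightarrow> v \<in> verts G | GE e \<Rightarrow> e \<in> arcs G | GG e \<Rightarrow> e \<in> arcs G)"

definition FA_mult :: "(('v,'e) gen list \<Rightarrow>\<^sub>0 'k::field) \<Rightarrow> _ \<Rightarrow> _" where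
  "FA_mult = pm_mult (\<lambda>u w. Some (u @ w))"

definition wd :: "('v,'e) gen list \<Rightarrow> (('v,'e) gen list \<Rightarrow>\<^sub>0 'k::field)" where
  "wd w = Poly_Mapping.single w 1"

definition FA_carrier :: "('v,'e) pre_digraph \<Rightarrow> (('v,'e) gen list \<Rightarrow>\<^sub>0 'k::field) set" where
  "FA_carrier G = pspan {wd w | w. w \<noteq> [] \<and> (\<forall>g\<in>set w. valid_gen G g)}"

text \<open>The Leavitt relations, each element r standing for the relation r = 0.\<close>
definition LPA_rels :: "('v,'e) pre_digraph \<Rightarrow> (('v,'e) gen list \<Rightarrow>\<^sub>0 'k::field) set" where
  "LPA_rels G =
     {wd [GV v, GV w] - (if v = w then wd [GV v] else 0) | v w. v \<in> verts G \<and> w \<in> verts G}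
   \<union> {wd [GV (tail G e), GE e] - wd [GE e] | e. e \<in> arcs G}
   \<union> {wd [GE e, GV (head G e)] - wd [GE e] | e. e \<in> arcs G}
   \<union> {wd [GV (head G e), GG e] - wd [GG e] | e. e \<in> arcs G}
   \<union> {wd [GG e, GV (tail G e)] - wd [GG e] | e. e \<in> arcs G}
   \<union> {wd [GG e, GE f] - (if e = f then wd [GV (head G e)] else 0) | e f. e \<in> arcs G \<and> f \<in> arcs G}
   \<union> {(\<Sum>e\<in>{e \<in> arcs G. tail G e = v}. wd [GE e, GG e]) - wd [GV v] | v.
        v \<in> verts G \<and> 0 < card {e \<in> arcs G. tail G e = v} \<and> finite {e \<in> arcs G. tail G e = v}}"

definition LPA_ideal :: "('v,'e) pre_digraph \<Rightarrow> (('v,'e) gen list \<Rightarrow>\<^sub>0 'k::field) set" where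
  "LPA_ideal G = pspan {FA_mult (FA_mult (wd u) r) (wd w) | u r w.
      (\<forall>g\<in>set u. valid_gen G g) \<and> (\<forall>g\<in>set w. valid_gen G g) \<and> r \<in> LPA_rels G}"

text \<open>Words for lambda and mu* (a vertex path v gives the vertex v in both cases).\<close>
definition path_word :: "('v,'e) path \<Rightarrow> ('v,'e) gen list" where
  "path_word p = (if snd p = [] then [GV (fst p)] else map GE (snd p))"

definition ghost_word :: "('v,'e) path \<Rightarrow> ('v,'e) gen list" where
  "ghost_word p = (if snd p = [] then [GV (fst p)] else map GG (rev (snd p)))"

definition LPA_filt :: "('v,'e) pre_digraph \<Rightarrow> nat \<Rightarrow> (('v,'e) gen list \<Rightarrow>\<^sub>0 'k::field) set" where
  "LPA_filt G n = pspan {FA_mult (wd (path_word p)) (wd (ghost_word q)) | p q.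
      is_path G p \<and> is_path G q \<and> path_len p + path_len q \<le> n}"

definition leavitt_type :: "'k::field itself \<Rightarrow> ('v,'e) pre_digraph \<Rightarrow> enat \<times> ereal \<times> ereal" where
  "leavitt_type K G = alg_type FA_mult (LPA_ideal G :: (('v,'e) gen list \<Rightarrow>\<^sub>0 'k) set)
      (FA_carrier G) (LPA_filt G)"

definition exactly_one3 :: "bool \<Rightarrow> bool \<Rightarrow> bool \<Rightarrow> bool" where
  "exactly_one3 P Q R = ((P \<and> \<not> Q \<and> \<not> R) \<or> (\<not> P \<and> Q \<and> \<not> R) \<or> (\<not> P \<and> \<not> Q \<and> R))"

end

theory Submission
  imports Defs
begin

lemma logdim_enat: "logdim (enat j) = ereal (ln (real j))"
  by (simp add: logdim_def)

lemma lim1: "((\<lambda>n. L / ln (real n)) \<longlongrightarrow> 0) sequentially"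
  by (rule tendsto_divide_0[OF tendsto_const filterlim_at_top_imp_at_infinity])
     (rule filterlim_compose[OF ln_at_top filterlim_real_sequentially])

lemma lim2: "eventually (\<lambda>n. real n / ln (real n) \<ge> K) sequentially"
proof -
  have "eventually (\<lambda>n. n \<ge> max 2 (nat \<lceil>4 * K^2\<rceil>)) sequentially"
    by (rule eventually_ge_at_top)
  then show ?thesis
  proof eventually_elim
    case (elim n)
    have n2: "real n \<ge> 2" using elim by simp
    have nK: "real n \<ge> 4 * K^2" using elim by linarith
    have sq: "sqrt (real n) > 0" using n2 by simp
    have "ln (real n) = 2 * ln (sqrt (real n))" using n2 by (simp add: ln_sqrt)
    also have "\<dots> \<le> 2 * sqrt (real n)" using ln_bound[OF sq] by simp
    finally have l: "ln (real n) \<le> 2 * sqrt (real n)" .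
    have lp: "ln (real n) > 0" using n2 by simp
    have "real n / (2 * sqrt (real n)) \<le> real n / ln (real n)"
      using l lp n2 by (intro divide_left_mono) auto
    moreover have "real n / (2 * sqrt (real n)) = sqrt (real n) / 2"
      using sq by (simp add: field_simps)
    moreover have "sqrt (real n) \<ge> sqrt (4 * K^2)" using nK by simp
    moreover have "sqrt (4 * K^2) = 2 * \<bar>K\<bar>" by (simp add: real_sqrt_mult)
    ultimately show ?case by linarith
  qed
qed

lemma gk_bounded:
  fixes D :: "nat \<Rightarrow> enat"
  assumes "\<And>n. D n \<le> enat k"
  shows "limsup (\<lambda>n. logdim (D n) / ereal (ln (real n))) = 0"
proof -
  let ?a = "\<lambda>n. logdim (D n) / ereal (ln (real n))"
  define L where "L = ln (real k)"
  have ev: "eventually (\<lambda>n. 0 \<le> ?a n \<and> ?a n \<le> ereal (L / ln (real n))) sequentially"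
    using eventually_ge_at_top[of 2]
  proof eventually_elim
    case (elim n)
    have lnpos: "ln (real n) > 0" using elim by simp
    obtain j where j: "D n = enat j" "j \<le> k" using assms[of n] by (cases "D n") auto
    have "0 \<le> ln (real j)" by (cases "j = 0") auto
    moreover have "ln (real j) \<le> L"
      using j by (cases "j = 0"; cases "k = 0") (auto simp: L_def)
    ultimately show ?case using j lnpos
      by (auto simp: logdim_enat divide_right_mono)
  qed
  have "limsup ?a \<le> limsup (\<lambda>n. ereal (L / ln (real n)))"
    by (rule Limsup_mono) (use ev in \<open>auto elim: eventually_mono\<close>)
  also have "\<dots> = 0"
    using lim_imp_Limsup[OF trivial_limit_sequentially tendsto_ereal[OF lim1[of L]]]
    by (simp add: zero_ereal_def)
  finally have "limsup ?a \<le> 0" .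
  moreover have "0 \<le> limsup ?a"
    by (rule le_Limsup) (use ev in \<open>auto elim: eventually_mono\<close>)
  ultimately show ?thesis by simp
qed

lemma h_bounded:
  fixes g :: "nat \<Rightarrow> enat" and c \<beta> :: nat
  assumes "\<And>n. g n \<le> enat (c * \<beta>^n)" "c \<ge> 1" "\<beta> \<ge> 1"
  shows "\<exists>r \<ge> 0. limsup (\<lambda>n. logdim (g n) / ereal (real n)) = ereal r"
proof -
  let ?b = "\<lambda>n. logdim (g n) / ereal (real n)"
  define U where "U = ln (real c) + ln (real \<beta>)"
  have ev: "eventually (\<lambda>n. 0 \<le> ?b n \<and> ?b n \<le> ereal U) sequentially"
    using eventually_ge_at_top[of 1]
  proof eventually_elim
    case (elim n)
    obtain j where j: "g n = enat j" "j \<le> c * \<beta>^n" using assms(1)[of n] by (cases "g n") auto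
    have lc: "ln (real c) \<ge> 0" "ln (real \<beta>) \<ge> 0" using assms by auto
    have "ln (real j) \<le> ln (real c) + real n * ln (real \<beta>)"
    proof (cases "j = 0")
      case True then show ?thesis using lc by simp
    next
      case False
      have "real j \<le> real (c * \<beta>^n)" using j by linarith
      then have "ln (real j) \<le> ln (real (c * \<beta>^n))" using False by (subst ln_le_cancel_iff) auto
      also have "\<dots> = ln (real c) + real n * ln (real \<beta>)"
        using assms by (simp add: ln_mult ln_realpow)
      finally show ?thesis .
    qed
    then have "ln (real j) / real n \<le> (ln (real c) + real n * ln (real \<beta>)) / real n"
      using elim by (simp add: divide_right_mono)
    also have "\<dots> = ln (real c) / real n + ln (real \<beta>)"
      using elim by (simp add: add_divide_distrib)
    also have "\<dots> \<le> U" 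
    proof -
      have "ln (real c) * 1 \<le> ln (real c) * real n" using lc elim by (intro mult_left_mono) auto
      then have "ln (real c) / real n \<le> ln (real c)" using elim by (simp add: divide_le_eq)
      then show ?thesis unfolding U_def by simp
    qed
    finally have up: "ln (real j) / real n \<le> U" .
    have "0 \<le> ln (real j)" by (cases "j = 0") auto
    then show ?case using j up elim by (auto simp: logdim_enat)
  qed
  have up: "limsup ?b \<le> ereal U"
    by (rule Limsup_bounded) (use ev in \<open>auto elim: eventually_mono\<close>)
  have lo: "0 \<le> limsup ?b"
    by (rule le_Limsup) (use ev in \<open>auto elim: eventually_mono\<close>)
  show ?thesis using up lo by (cases "limsup ?b") auto
qed

lemma gk_nonneg:
  fixes D :: "nat \<Rightarrow> enat"
  shows "0 \<le> limsup (\<lambda>n. logdim (D n) / ereal (ln (real n)))"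
proof (rule le_Limsup)
  show "eventually (\<lambda>n. 0 \<le> logdim (D n) / ereal (ln (real n))) sequentially"
    using eventually_ge_at_top[of 2]
  proof eventually_elim
    case (elim n)
    have lnpos: "ln (real n) > 0" using elim by simp
    show ?case
    proof (cases "D n")
      case (enat j)
      have "0 \<le> ln (real j)" by (cases "j = 0") auto
      then show ?thesis using enat lnpos by (simp add: logdim_enat)
    next
      case infinity then show ?thesis using lnpos by (simp add: logdim_def)
    qed
  qed
qed simp

lemma h_pos_gk_inf:
  fixes D g :: "nat \<Rightarrow> enat"
  assumes le: "\<And>n. n \<ge> 1 \<Longrightarrow> g n \<le> D n" and fin: "\<And>n. g n \<noteq> \<infinity>"
    and pos: "limsup (\<lambda>n. logdim (g n) / ereal (real n)) > 0"
  shows "limsup (\<lambda>n. logdim (D n) / ereal (ln (real n))) = \<infinity>"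
proof (rule ccontr)
  let ?a = "\<lambda>n. logdim (D n) / ereal (ln (real n))"
  let ?b = "\<lambda>n. logdim (g n) / ereal (real n)"
  assume "limsup ?a \<noteq> \<infinity>"
  moreover have "limsup ?a \<noteq> -\<infinity>" using gk_nonneg[of D] by auto
  ultimately obtain M where M: "limsup ?a = ereal M" by (cases "limsup ?a") auto
  have evA: "eventually (\<lambda>n. ?a n < ereal (M + 1)) sequentially"
    by (rule Limsup_lessD) (simp add: M)
  obtain \<epsilon> where eps: "\<epsilon> > 0" "ereal \<epsilon> < limsup ?b"
  proof (cases "limsup ?b")
    case (real r)
    then show ?thesis using pos that[of "r/2"] by simp
  next
    case PInf
    then show ?thesis using that[of 1] by simp
  next
    case MInf
    then show ?thesis using pos by simp
  qed
  have frB: "frequently (\<lambda>n. ?b n \<ge> ereal \<epsilon>) sequentially"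
  proof (rule ccontr)
    assume "\<not> frequently (\<lambda>n. ?b n \<ge> ereal \<epsilon>) sequentially"
    then have "eventually (\<lambda>n. ?b n \<le> ereal \<epsilon>) sequentially"
      unfolding frequently_def by (auto elim: eventually_mono)
    then have "limsup ?b \<le> ereal \<epsilon>" by (rule Limsup_bounded)
    then show False using eps by simp
  qed
  have evK: "eventually (\<lambda>n. real n / ln (real n) \<ge> (M + 1) / \<epsilon>) sequentially"
    by (rule lim2)
  have "frequently (\<lambda>n. ?b n \<ge> ereal \<epsilon> \<and> (?a n < ereal (M + 1) \<and>
          real n / ln (real n) \<ge> (M + 1) / \<epsilon> \<and> n \<ge> 2)) sequentially"
    by (rule frequently_eventually_frequently[OF frB eventually_conj[OF evA eventually_conj[OF evK eventually_ge_at_top[of 2]]]])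
  then obtain n where n: "?b n \<ge> ereal \<epsilon>" "?a n < ereal (M + 1)"
     "real n / ln (real n) \<ge> (M + 1) / \<epsilon>" "n \<ge> 2"
    using frequently_ex by blast
  have lnpos: "ln (real n) > 0" using n by simp
  obtain j where j: "g n = enat j" using fin[of n] by (cases "g n") auto
  have "ereal \<epsilon> \<le> ereal (ln (real j) / real n)" using n(1) j n(4) by (simp add: logdim_enat)
  then have jbig: "\<epsilon> * real n \<le> ln (real j)" using n(4) by (simp add: le_divide_eq)
  have "\<epsilon> * real n > 0" using eps n(4) by simp
  then have "j \<noteq> 0" using jbig by (intro notI) simp
  then have "j \<ge> 1" by simp
  show False
  proof (cases "D n")
    case infinity then show ?thesis using n(2) lnpos by (simp add: logdim_def)
  next
    case (enat j')
    have "j \<le> j'" using le[of n] n(4) j enat by simp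
    then have "ln (real j) \<le> ln (real j')" using \<open>j \<ge> 1\<close> by simp
    then have "\<epsilon> * real n \<le> ln (real j')" using jbig by simp
    then have "\<epsilon> * (real n / ln (real n)) \<le> ln (real j') / ln (real n)"
      using lnpos by (simp add: divide_right_mono)
    moreover have "M + 1 \<le> \<epsilon> * (real n / ln (real n))"
      using n(3) eps by (simp add: divide_le_eq mult.commute)
    ultimately have "M + 1 \<le> ln (real j') / ln (real n)" by simp
    then show False using n(2) enat lnpos by (simp add: logdim_enat)
  qed
qed

lemma lookup_pm_scale[simp]: "Poly_Mapping.lookup (pm_scale c p) k = c * Poly_Mapping.lookup p k"
  by (simp add: pm_scale_def map.rep_eq when_def)

lemma vs_pm: "vector_space (pm_scale :: 'k::field \<Rightarrow> ('w \<Rightarrow>\<^sub>0 'k) \<Rightarrow> _)"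
  by unfold_locales (auto intro!: poly_mapping_eqI simp: lookup_add algebra_simps)

interpretation pmv: vector_space "pm_scale :: 'k::field \<Rightarrow> ('w \<Rightarrow>\<^sub>0 'k) \<Rightarrow> _"
  by (rule vs_pm)

abbreviation plusM :: "('w \<Rightarrow>\<^sub>0 'k::field) set \<Rightarrow> ('w \<Rightarrow>\<^sub>0 'k) set \<Rightarrow> ('w \<Rightarrow>\<^sub>0 'k) set" where
  "plusM B M \<equiv> {b + x | b x. b \<in> pspan B \<and> x \<in> M}"

lemma good_card:
  fixes M :: "('w \<Rightarrow>\<^sub>0 'k::field) set"
  assumes M: "pmv.subspace M" and B: "finite B" and A: "finite A" "A \<subseteq> plusM B M"
    and g: "\<forall>c. (\<Sum>a\<in>A. pm_scale (c a) a) \<in> M \<longrightarrow> (\<forall>a\<in>A. c a = 0)"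
  shows "card A \<le> card B"
proof -
  have "\<forall>a\<in>A. \<exists>b. b \<in> pspan B \<and> a - b \<in> M" using A(2) by force
  then obtain \<beta> where \<beta>: "\<And>a. a \<in> A \<Longrightarrow> \<beta> a \<in> pspan B \<and> a - \<beta> a \<in> M" by metis
  have key: "\<forall>a\<in>A. c a = 0" if z: "(\<Sum>a\<in>A. pm_scale (c a) (\<beta> a)) = 0" for c
  proof -
    have "(\<Sum>a\<in>A. pm_scale (c a) a) = (\<Sum>a\<in>A. pm_scale (c a) (\<beta> a)) + (\<Sum>a\<in>A. pm_scale (c a) (a - \<beta> a))"
      by (simp add: sum.distrib[symmetric] pmv.scale_right_diff_distrib)
    also have "\<dots> \<in> M" unfolding z using \<beta> M
      by (auto intro!: pmv.subspace_sum pmv.subspace_scale)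
    finally show ?thesis using g by blast
  qed
  have inj: "inj_on \<beta> A"
  proof (rule inj_onI, rule ccontr)
    fix a a' assume aa: "a \<in> A" "a' \<in> A" "\<beta> a = \<beta> a'" "a \<noteq> a'"
    define c where "c x = (if x = a then 1 else if x = a' then -1 else (0::'k))" for x
    have "(\<Sum>x\<in>A. pm_scale (c x) (\<beta> x)) = (\<Sum>x\<in>{a,a'}. pm_scale (c x) (\<beta> x))"
      using aa A(1) by (intro sum.mono_neutral_right) (auto simp: c_def)
    also have "\<dots> = 0" using aa by (simp add: c_def pmv.scale_left_distrib[symmetric])
    finally have "c a = 0" using key aa by blast
    then show False by (simp add: c_def)
  qed
  have ind: "pmv.independent (\<beta> ` A)"
  proof (rule pmv.independent_if_scalars_zero)
    show "finite (\<beta> ` A)" using A by simp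
    fix f x assume s: "(\<Sum>x\<in>\<beta> ` A. pm_scale (f x) x) = 0" and x: "x \<in> \<beta> ` A"
    have "(\<Sum>a\<in>A. pm_scale (f (\<beta> a)) (\<beta> a)) = 0" using s by (simp add: sum.reindex[OF inj])
    then have "\<forall>a\<in>A. f (\<beta> a) = 0" by (rule key[of "\<lambda>a. f (\<beta> a)"])
    then show "f x = 0" using x by auto
  qed
  have "card (\<beta> ` A) \<le> card B"
    using pmv.independent_span_bound[OF B ind] \<beta> by auto
  then show ?thesis using card_image[OF inj] by simp
qed

lemma core:
  fixes M :: "('w \<Rightarrow>\<^sub>0 'k::field) set"
  assumes M: "pmv.subspace M" and B: "finite B" and S: "S \<subseteq> plusM B M"
  shows "\<exists>B'. finite B' \<and> card B' \<le> card B \<and> B' \<subseteq> S \<and> S \<subseteq> plusM B' M"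
proof -
  define good where "good A \<longleftrightarrow> finite A \<and> A \<subseteq> S \<and>
     (\<forall>c. (\<Sum>a\<in>A. pm_scale (c a) a) \<in> M \<longrightarrow> (\<forall>a\<in>A. c a = 0))" for A
  have gb: "good A \<Longrightarrow> card A \<le> card B" for A
    using good_card[OF M B, of A] S unfolding good_def by blast
  have "good {}" using M by (simp add: good_def)
  have "\<exists>k. (\<exists>A. good A \<and> card A = k) \<and> (\<forall>y. (\<exists>A. good A \<and> card A = y) \<longrightarrow> y \<le> k)"
    by (rule Nat.ex_has_greatest_nat[where b = "card B" and P="\<lambda>k. \<exists>A. good A \<and> card A = k" and k=0])
       (use gb \<open>good {}\<close> in auto)
  then obtain A where gA: "good A" and mx: "\<And>A'. good A' \<Longrightarrow> card A' \<le> card A" by blast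
  have "S \<subseteq> plusM A M"
  proof
    fix s assume sS: "s \<in> S"
    show "s \<in> plusM A M"
    proof (rule ccontr)
      assume ns: "s \<notin> plusM A M"
      have "s \<notin> A"
      proof
        assume "s \<in> A" then have "s + 0 \<in> plusM A M" using pmv.span_base[of s A] pmv.subspace_0[OF M] by blast
        then show False using ns by simp
      qed
      have fA: "finite A" using gA good_def by blast
      have "good (insert s A)"
        unfolding good_def
      proof (intro conjI allI impI)
        show "finite (insert s A)" using fA by simp
        show "insert s A \<subseteq> S" using gA sS good_def by blast
        fix c assume cM: "(\<Sum>a\<in>insert s A. pm_scale (c a) a) \<in> M"
        have eq: "(\<Sum>a\<in>insert s A. pm_scale (c a) a) = pm_scale (c s) s + (\<Sum>a\<in>A. pm_scale (c a) a)"
          using fA \<open>s \<notin> A\<close> by simp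
        have cs: "c s = 0"
        proof (rule ccontr)
          assume cs: "c s \<noteq> 0"
          define m where "m = (\<Sum>a\<in>insert s A. pm_scale (c a) a)"
          have "s = pm_scale (- inverse (c s)) (\<Sum>a\<in>A. pm_scale (c a) a) + pm_scale (inverse (c s)) m"
            using cs unfolding m_def eq by (simp add: pmv.scale_right_distrib)
          moreover have "pm_scale (- inverse (c s)) (\<Sum>a\<in>A. pm_scale (c a) a) \<in> pspan A"
            by (intro pmv.span_scale pmv.span_sum pmv.span_base) auto
          moreover have "pm_scale (inverse (c s)) m \<in> M" using cM M m_def pmv.subspace_scale by blast
          ultimately show False using ns by blast
        qed
        then have "(\<Sum>a\<in>A. pm_scale (c a) a) \<in> M" using cM eq by simp
        then show "\<forall>a\<in>insert s A. c a = 0" using cs gA good_def by blast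
      qed
      then have "card (insert s A) \<le> card A" by (rule mx)
      then show False using fA \<open>s \<notin> A\<close> by simp
    qed
  qed
  then show ?thesis using gA gb good_def by blast
qed

lemma qdim_mono:
  fixes M :: "('w \<Rightarrow>\<^sub>0 'k::field) set"
  assumes M: "pmv.subspace M" and S: "S \<subseteq> plusM T M"
  shows "qdim M S \<le> qdim M T"
proof (cases "\<exists>B. finite B \<and> B \<subseteq> T \<and> T \<subseteq> plusM B M")
  case False then have "qdim M T = \<infinity>" unfolding qdim_def by auto
  then show ?thesis by simp
next
  case True
  let ?P = "\<lambda>n. \<exists>B. finite B \<and> card B = n \<and> B \<subseteq> T \<and> T \<subseteq> plusM B M"
  from True have "\<exists>n. ?P n" by blast
  then have "?P (LEAST n. ?P n)" by (rule LeastI_ex)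
  then obtain B where B: "finite B" "card B = (LEAST n. ?P n)" "T \<subseteq> plusM B M" by blast
  have sub: "pmv.subspace (plusM B M)"
    using pmv.subspace_sums[OF pmv.subspace_span M] by simp
  have "pspan T \<subseteq> plusM B M" using pmv.span_minimal[OF B(3) sub] .
  have "S \<subseteq> plusM B M"
  proof
    fix s assume "s \<in> S"
    then obtain b x where s: "s = b + x" "b \<in> pspan T" "x \<in> M" using S by blast
    then obtain b' x' where "b = b' + x'" "b' \<in> pspan B" "x' \<in> M" using \<open>pspan T \<subseteq> plusM B M\<close> by blast
    then have "s = b' + (x' + x)" "x' + x \<in> M" using s M pmv.subspace_add by (auto simp: add.assoc)
    then show "s \<in> plusM B M" using \<open>b' \<in> pspan B\<close> by blast
  qed
  from core[OF M B(1) this] obtain B' where B': "finite B'" "card B' \<le> card B" "B' \<subseteq> S" "S \<subseteq> plusM B' M"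
    by blast
  then have "qdim M S = enat (LEAST n. \<exists>B. finite B \<and> card B = n \<and> B \<subseteq> S \<and> S \<subseteq> plusM B M)"
    unfolding qdim_def by auto
  also have "\<dots> \<le> enat (card B')" using B' by (auto intro!: Least_le)
  also have "\<dots> \<le> enat (card B)" using B' by simp
  also have "\<dots> = qdim M T" using True B(2) unfolding qdim_def by simp
  finally show ?thesis .
qed

lemma qdim_le_card:
  fixes M :: "('w \<Rightarrow>\<^sub>0 'k::field) set"
  assumes "finite X" "0 \<in> M"
  shows "qdim M (pspan X) \<le> enat (card X)"
proof -
  have h: "finite X \<and> card X = card X \<and> X \<subseteq> pspan X \<and> pspan X \<subseteq> plusM X M"
    using assms pmv.span_superset by force
  then have "qdim M (pspan X) = enat (LEAST n. \<exists>B. finite B \<and> card B = n \<and> B \<subseteq> pspan X \<and> pspan X \<subseteq> plusM B M)"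
    unfolding qdim_def by auto
  also have "\<dots> \<le> enat (card X)" using h by (auto intro!: Least_le)
  finally show ?thesis .
qed

lemma qdim_antimono:
  fixes M :: "('w \<Rightarrow>\<^sub>0 'k::field) set"
  assumes "M \<subseteq> M'"
  shows "qdim M' S \<le> qdim M S"
proof (cases "\<exists>B. finite B \<and> B \<subseteq> S \<and> S \<subseteq> plusM B M")
  case False then have "qdim M S = \<infinity>" unfolding qdim_def by auto
  then show ?thesis by simp
next
  case True
  let ?P = "\<lambda>n. \<exists>B. finite B \<and> card B = n \<and> B \<subseteq> S \<and> S \<subseteq> plusM B M"
  from True have "\<exists>n. ?P n" by blast
  then have "?P (LEAST n. ?P n)" by (rule LeastI_ex)
  then obtain B where B: "finite B" "card B = (LEAST n. ?P n)" "B \<subseteq> S" "S \<subseteq> plusM B M" by blast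
  have B2: "S \<subseteq> plusM B M'" using B(4) assms by blast
  then have "qdim M' S = enat (LEAST n. \<exists>B. finite B \<and> card B = n \<and> B \<subseteq> S \<and> S \<subseteq> plusM B M')"
    using B unfolding qdim_def by auto
  also have "\<dots> \<le> enat (card B)" using B B2 by (auto intro!: Least_le)
  also have "\<dots> = qdim M S" using True B(2) unfolding qdim_def by simp
  finally show ?thesis .
qed

lemma main_generic:
  fixes mult :: "('w \<Rightarrow>\<^sub>0 'k::field) \<Rightarrow> ('w \<Rightarrow>\<^sub>0 'k) \<Rightarrow> ('w \<Rightarrow>\<^sub>0 'k)"
    and I C :: "('w \<Rightarrow>\<^sub>0 'k) set" and F X :: "nat \<Rightarrow> ('w \<Rightarrow>\<^sub>0 'k) set" and c \<beta> :: nat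
  assumes I: "pmv.subspace I" and C: "pmv.subspace C"
    and FX: "\<And>n. F n = pspan (X n)" and Xfin: "\<And>n. finite (X n)"
    and Xcard: "\<And>n. card (X n) \<le> c * \<beta>^n" and c1: "c \<ge> 1" and b1: "\<beta> \<ge> 1"
    and prodsC: "\<And>n. prods_upto mult (F 1) n \<subseteq> C"
    and Fn: "\<And>n. n \<ge> 1 \<Longrightarrow> F n \<subseteq> plusM (prods_upto mult (F 1) n) I"
  shows "exactly_one3
           (\<exists>k::nat. alg_type mult I C F = (enat k, 0, 0))
           (\<exists>l::real. alg_type mult I C F = (\<infinity>, ereal l, 0))
           (\<exists>m::real. alg_type mult I C F = (\<infinity>, \<infinity>, ereal m))"
proof -
  define D where "D n = qdim I (pspan (prods_upto mult (F 1) n))" for n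
  define g where "g n = graded_dim I F n" for n
  have gk: "gk_dim mult I (F 1) = limsup (\<lambda>n. logdim (D n) / ereal (ln (real n)))"
    by (simp add: gk_dim_def D_def)
  have hd: "h_alg I C F = (if alg_dim I C \<noteq> \<infinity> then 0 else limsup (\<lambda>n. logdim (g n) / ereal (real n)))"
    by (simp add: h_alg_def g_def)
  have gb: "g n \<le> enat (c * \<beta>^n)" for n
  proof -
    have "g n \<le> enat (card (X n))" unfolding g_def graded_dim_def FX
      by (rule qdim_le_card[OF Xfin pmv.span_zero])
    also have "\<dots> \<le> enat (c * \<beta>^n)" using Xcard[of n] by simp
    finally show ?thesis .
  qed
  have gfin: "g n \<noteq> \<infinity>" for n using gb[of n] by (cases "g n") auto
  have gD: "g n \<le> D n" if "n \<ge> 1" for n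
  proof -
    have "g n \<le> qdim I (F n)" unfolding g_def graded_dim_def
      by (rule qdim_antimono) (use pmv.span_superset in blast)
    also have "\<dots> \<le> D n" unfolding D_def
      by (rule qdim_mono[OF I]) (unfold pmv.span_span, rule Fn[OF that])
    finally show ?thesis .
  qed
  show ?thesis
  proof (cases "alg_dim I C")
    case (enat k)
    have "D n \<le> enat k" for n
    proof -
      have "pspan (prods_upto mult (F 1) n) \<subseteq> C" by (rule pmv.span_minimal[OF prodsC C])
      moreover have "C \<subseteq> plusM C I"
      proof
        fix x assume "x \<in> C"
        then have "x + 0 \<in> plusM C I" using pmv.span_base[of x C] pmv.subspace_0[OF I] by blast
        then show "x \<in> plusM C I" by simp
      qed
      ultimately have "pspan (prods_upto mult (F 1) n) \<subseteq> plusM C I" by (rule order_trans)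
      then have "D n \<le> qdim I C" unfolding D_def by (rule qdim_mono[OF I])
      then show ?thesis using enat by (simp add: alg_dim_def)
    qed
    then have "gk_dim mult I (F 1) = 0" unfolding gk by (rule gk_bounded)
    then have "alg_type mult I C F = (enat k, 0, 0)" using enat by (simp add: alg_type_def hd)
    then show ?thesis unfolding exactly_one3_def by simp
  next
    case infinity
    obtain r where r: "r \<ge> 0" "limsup (\<lambda>n. logdim (g n) / ereal (real n)) = ereal r"
      using h_bounded[of g c \<beta>, OF gb c1 b1] by blast
    have h: "h_alg I C F = ereal r" using hd infinity r by simp
    show ?thesis
    proof (cases "r > 0")
      case True
      have "gk_dim mult I (F 1) = \<infinity>" unfolding gk
        by (rule h_pos_gk_inf[OF gD gfin]) (use r True in auto)
      then have "alg_type mult I C F = (\<infinity>, \<infinity>, ereal r)" using h infinity by (simp add: alg_type_def)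
      then show ?thesis unfolding exactly_one3_def by simp
    next
      case False
      then have r0: "r = 0" using r by simp
      have nn: "0 \<le> gk_dim mult I (F 1)" unfolding gk by (rule gk_nonneg)
      show ?thesis
      proof (cases "gk_dim mult I (F 1)")
        case (real l)
        then have "alg_type mult I C F = (\<infinity>, ereal l, 0)" using h infinity r0 by (simp add: alg_type_def)
        then show ?thesis unfolding exactly_one3_def by simp
      next
        case PInf
        then have "alg_type mult I C F = (\<infinity>, \<infinity>, ereal 0)" using h infinity r0 by (simp add: alg_type_def)
        then show ?thesis unfolding exactly_one3_def by simp
      next
        case MInf then show ?thesis using nn by simp
      qed
    qed
  qed
qed

lemma lookup_pm_mult:
  "Poly_Mapping.lookup (pm_mult m p q) z = (\<Sum>u\<in>Poly_Mapping.keys p. \<Sum>w\<in>Poly_Mapping.keys q.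
      (if m u w = Some z then Poly_Mapping.lookup p u * Poly_Mapping.lookup q w else 0))"
  unfolding pm_mult_def lookup_sum
  by (intro sum.cong refl) (auto split: option.split simp: lookup_single when_def)

lemma lookup_pm_mult_gen:
  assumes "finite U" "Poly_Mapping.keys p \<subseteq> U" "finite W" "Poly_Mapping.keys q \<subseteq> W"
  shows "Poly_Mapping.lookup (pm_mult m p q) z = (\<Sum>u\<in>U. \<Sum>w\<in>W.
      (if m u w = Some z then Poly_Mapping.lookup p u * Poly_Mapping.lookup q w else 0))"
proof -
  have "Poly_Mapping.lookup (pm_mult m p q) z = (\<Sum>u\<in>U. \<Sum>w\<in>Poly_Mapping.keys q.
      (if m u w = Some z then Poly_Mapping.lookup p u * Poly_Mapping.lookup q w else 0))"
    unfolding lookup_pm_mult using assms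
    by (intro sum.mono_neutral_left) (auto simp: in_keys_iff intro!: sum.neutral)
  also have "\<dots> = (\<Sum>u\<in>U. \<Sum>w\<in>W.
      (if m u w = Some z then Poly_Mapping.lookup p u * Poly_Mapping.lookup q w else 0))"
    using assms by (intro sum.cong refl sum.mono_neutral_left) (auto simp: in_keys_iff)
  finally show ?thesis .
qed

lemma pm_mult_add_left: "pm_mult m (p + p') q = pm_mult m p q + pm_mult m p' q"
proof (rule poly_mapping_eqI)
  fix z
  let ?U = "Poly_Mapping.keys p \<union> Poly_Mapping.keys p' \<union> Poly_Mapping.keys (p + p')"
  show "Poly_Mapping.lookup (pm_mult m (p + p') q) z = Poly_Mapping.lookup (pm_mult m p q + pm_mult m p' q) z"
    unfolding lookup_add
    by (subst (1 2 3) lookup_pm_mult_gen[where U = ?U and W = "Poly_Mapping.keys q"])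
       (auto simp: lookup_add sum.distrib[symmetric] algebra_simps intro!: sum.cong)
qed

lemma pm_mult_add_right: "pm_mult m p (q + q') = pm_mult m p q + pm_mult m p q'"
proof (rule poly_mapping_eqI)
  fix z
  let ?W = "Poly_Mapping.keys q \<union> Poly_Mapping.keys q' \<union> Poly_Mapping.keys (q + q')"
  show "Poly_Mapping.lookup (pm_mult m p (q + q')) z = Poly_Mapping.lookup (pm_mult m p q + pm_mult m p q') z"
    unfolding lookup_add
    by (subst (1 2 3) lookup_pm_mult_gen[where W = ?W and U = "Poly_Mapping.keys p"])
       (auto simp: lookup_add sum.distrib[symmetric] algebra_simps intro!: sum.cong)
qed

lemma pm_mult_diff_left: "pm_mult m (p - p') q = pm_mult m p q - pm_mult m p' q"
  using pm_mult_add_left[of m "p - p'" p' q] by (simp add: eq_diff_eq)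

lemma pm_mult_diff_right: "pm_mult m p (q - q') = pm_mult m p q - pm_mult m p q'"
  using pm_mult_add_right[of m p "q - q'" q'] by (simp add: eq_diff_eq)

lemma pm_mult_single:
  "pm_mult m (Poly_Mapping.single u a) (Poly_Mapping.single w b) =
     (case m u w of None \<Rightarrow> 0 | Some z \<Rightarrow> Poly_Mapping.single z (a * b))"
  by (cases "a = 0"; cases "b = 0") (auto simp: pm_mult_def split: option.split)

lemma keys_pm_mult:
  "Poly_Mapping.keys (pm_mult m p q) \<subseteq> {z. \<exists>u\<in>Poly_Mapping.keys p. \<exists>w\<in>Poly_Mapping.keys q. m u w = Some z}"
  unfolding pm_mult_def
  by (rule order_trans[OF keys_sum], rule UN_least, rule order_trans[OF keys_sum])
     (auto split: option.splits if_splits; blast)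

lemma keys_pm_scale: "Poly_Mapping.keys (pm_scale c p) \<subseteq> Poly_Mapping.keys p"
  by (auto simp: in_keys_iff)

lemma span_keys:
  "(p \<in> pspan {Poly_Mapping.single w (1::'k::field) | w. P w}) \<longleftrightarrow> Poly_Mapping.keys p \<subseteq> {w. P w}"
proof
  assume "p \<in> pspan {Poly_Mapping.single w (1::'k) | w. P w}"
  then show "Poly_Mapping.keys p \<subseteq> {w. P w}"
  proof (induction rule: pmv.span_induct_alt)
    case base then show ?case by simp
  next
    case (step c x y)
    then have "Poly_Mapping.keys x \<subseteq> {w. P w}" by auto
    then show ?case using step keys_add[of "pm_scale c x" y] keys_pm_scale[of c x] by blast
  qed
next
  assume k: "Poly_Mapping.keys p \<subseteq> {w. P w}"
  have "p = (\<Sum>w\<in>Poly_Mapping.keys p. pm_scale (Poly_Mapping.lookup p w) (Poly_Mapping.single w 1))"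
  proof (rule poly_mapping_eqI)
    fix k
    have e: "(\<lambda>x. Poly_Mapping.lookup p x * (if x = k then 1 else 0)) = (\<lambda>x. if k = x then Poly_Mapping.lookup p k else 0)"
      by auto
    show "Poly_Mapping.lookup p k = Poly_Mapping.lookup (\<Sum>w\<in>Poly_Mapping.keys p. pm_scale (Poly_Mapping.lookup p w) (Poly_Mapping.single w 1)) k"
    proof -
      have "(\<Sum>x\<in>Poly_Mapping.keys p. Poly_Mapping.lookup p x * (if x = k then 1 else 0)) =
            (\<Sum>x\<in>Poly_Mapping.keys p. if k = x then Poly_Mapping.lookup p k else 0)"
        by (rule sum.cong) auto
      also have "\<dots> = Poly_Mapping.lookup p k" by (simp add: in_keys_iff)
      finally show ?thesis by (simp add: lookup_sum lookup_single when_def)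
    qed
  qed
  also have "\<dots> \<in> pspan {Poly_Mapping.single w (1::'k) | w. P w}"
    using k by (intro pmv.span_sum pmv.span_scale pmv.span_base) auto
  finally show "p \<in> pspan {Poly_Mapping.single w (1::'k) | w. P w}" .
qed

lemma pm_mult_in_span:
  assumes "\<And>u w z. u \<in> Poly_Mapping.keys p \<Longrightarrow> w \<in> Poly_Mapping.keys q \<Longrightarrow> m u w = Some z \<Longrightarrow> P z"
  shows "pm_mult m p q \<in> pspan {Poly_Mapping.single w (1::'k::field) | w. P w}"
  unfolding span_keys using keys_pm_mult[of m p q] assms by blast

lemma foldl_closed:
  assumes "\<And>x y. x \<in> C \<Longrightarrow> y \<in> C \<Longrightarrow> f x y \<in> C" "a \<in> C" "set ys \<subseteq> C"
  shows "foldl f a ys \<in> C"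
  using assms(2,3) by (induction ys arbitrary: a) (auto intro: assms(1))

lemma prods_closed:
  assumes "\<And>x y. x \<in> C \<Longrightarrow> y \<in> C \<Longrightarrow> f x y \<in> C" "V \<subseteq> C"
  shows "prods_upto f V n \<subseteq> C"
  unfolding prods_upto_def
proof clarify
  fix xs assume xs: "xs \<noteq> []" "set xs \<subseteq> V"
  then show "foldl f (hd xs) (tl xs) \<in> C"
    using assms by (cases xs) (auto intro!: foldl_closed[where C = C])
qed

lemma path_end_Cons: "path_end G (v, a # as) = path_end G (head G a, as)"
  by (simp add: path_end_def)

lemma edges_chain_append:
  "edges_chain G v (as @ bs) = (edges_chain G v as \<and> edges_chain G (path_end G (v, as)) bs)"
  by (induction as arbitrary: v) (auto simp: path_end_Cons, simp_all add: path_end_def)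

lemma edges_chain_arcs: "edges_chain G v es \<Longrightarrow> set es \<subseteq> arcs G"
  by (induction es arbitrary: v) auto

lemma is_path_cat: "path_cat G p q = Some z \<Longrightarrow> is_path G z"
  by (cases p; cases q) (auto simp: path_cat_def is_path_def edges_chain_append split: if_splits)

lemma sum_pow_le: "(\<Sum>i\<le>n. (a::nat)^i) \<le> (a + 1)^n"
proof (induction n)
  case 0 then show ?case by simp
next
  case (Suc n)
  have "a ^ n \<le> (a + 1)^n" by (rule power_mono) auto
  then have "a * a ^ n \<le> a * (a + 1)^n" by (rule mult_left_mono) simp
  from add_mono[OF Suc.IH this] show ?case by simp
qed

lemma paths_card:
  assumes "fin_digraph G"
  shows "finite {p. is_path G p \<and> path_len p \<le> n}"
    "card {p. is_path G p \<and> path_len p \<le> n} \<le> card (verts G) * (card (arcs G) + 1)^n"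
proof -
  interpret fin_digraph G by fact
  let ?L = "{xs. set xs \<subseteq> arcs G \<and> length xs \<le> n}"
  have sub: "{p. is_path G p \<and> path_len p \<le> n} \<subseteq> verts G \<times> ?L"
    using edges_chain_arcs[of G] by (fastforce simp: is_path_def path_len_def)
  have fin: "finite (verts G \<times> ?L)" by (simp add: finite_lists_length_le)
  then show "finite {p. is_path G p \<and> path_len p \<le> n}" using sub finite_subset by blast
  have "card {p. is_path G p \<and> path_len p \<le> n} \<le> card (verts G \<times> ?L)"
    by (rule card_mono[OF fin sub])
  also have "\<dots> = card (verts G) * (\<Sum>i\<le>n. card (arcs G)^i)"
    by (simp add: card_cartesian_product card_lists_length_le)
  also have "\<dots> \<le> card (verts G) * (card (arcs G) + 1)^n"
    by (intro mult_left_mono sum_pow_le) simp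
  finally show "card {p. is_path G p \<and> path_len p \<le> n} \<le> card (verts G) * (card (arcs G) + 1)^n" .
qed

lemma KE_mult_edge:
  assumes "wf_digraph G" "is_path G (v, as)" "path_end G (v, as) = tail G e" "e \<in> arcs G"
  shows "KE_mult G (Poly_Mapping.single (v, as) (1::'k::field)) (Poly_Mapping.single (tail G e, [e]) 1)
       = Poly_Mapping.single (v, as @ [e]) 1"
proof -
  interpret wf_digraph G by fact
  have "is_path G (tail G e, [e])" using assms by (simp add: is_path_def)
  then have "path_cat G (v, as) (tail G e, [e]) = Some (v, as @ [e])"
    using assms by (simp add: path_cat_def)
  then show ?thesis by (simp add: KE_mult_def pm_mult_single)
qed

lemma KE_fold:
  assumes "wf_digraph G"
  shows "is_path G (v, as) \<Longrightarrow> edges_chain G (path_end G (v, as)) es \<Longrightarrow>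
    foldl (KE_mult G) (Poly_Mapping.single (v, as) (1::'k::field)) (map (\<lambda>e. Poly_Mapping.single (tail G e, [e]) 1) es)
      = Poly_Mapping.single (v, as @ es) 1"
proof (induction es arbitrary: as)
  case Nil then show ?case by simp
next
  case (Cons e es)
  have e: "e \<in> arcs G" "tail G e = path_end G (v, as)" "edges_chain G (head G e) es" using Cons.prems by auto
  have m: "KE_mult G (Poly_Mapping.single (v, as) (1::'k)) (Poly_Mapping.single (tail G e, [e]) 1)
       = Poly_Mapping.single (v, as @ [e]) 1"
    by (rule KE_mult_edge[OF assms Cons.prems(1) e(2)[symmetric] e(1)])
  have p: "is_path G (v, as @ [e])" using Cons.prems e
    by (simp add: is_path_def edges_chain_append)
  have pe: "path_end G (v, as @ [e]) = head G e" by (simp add: path_end_def)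
  show ?case using Cons.IH[OF p] e pe m by simp
qed

lemma edge_in_F1:
  assumes "wf_digraph G" "e \<in> arcs G"
  shows "Poly_Mapping.single (tail G e, [e]) (1::'k::field) \<in> KE_filt G 1"
proof -
  interpret wf_digraph G by fact
  have "Poly_Mapping.single (tail G e, [e]) (1::'k) \<in> {Poly_Mapping.single p 1 | p. is_path G p \<and> path_len p \<le> 1}"
    using assms by (intro CollectI exI[of _ "(tail G e, [e])"]) (simp add: is_path_def path_len_def)
  then show ?thesis unfolding KE_filt_def by (rule pmv.span_base)
qed

lemma KE_main:
  fixes G :: "('v,'e) pre_digraph" and K :: "'k::field itself"
  assumes fin: "fin_digraph G"
  shows "exactly_one3
           (\<exists>k::nat. path_alg_type K G = (enat k, 0, 0))
           (\<exists>l::real. path_alg_type K G = (\<infinity>, ereal l, 0))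
           (\<exists>m::real. path_alg_type K G = (\<infinity>, \<infinity>, ereal m))"
proof -
  interpret fin_digraph G by fact
  define X where "X n = {Poly_Mapping.single p (1::'k) | p. is_path G p \<and> path_len p \<le> n}" for n
  have XF: "KE_filt G n = pspan (X n)" for n by (simp add: KE_filt_def X_def)
  have Xim: "X n = (\<lambda>p. Poly_Mapping.single p 1) ` {p. is_path G p \<and> path_len p \<le> n}" for n
    by (auto simp: X_def)
  have Xfin: "finite (X n)" for n using paths_card(1)[OF fin] by (simp add: Xim)
  have Xcard: "card (X n) \<le> max 1 (card (verts G)) * (card (arcs G) + 1)^n" for n
  proof -
    have "card (X n) \<le> card {p. is_path G p \<and> path_len p \<le> n}" unfolding Xim by (rule card_image_le[OF paths_card(1)[OF fin]])
    also have "\<dots> \<le> card (verts G) * (card (arcs G) + 1)^n" by (rule paths_card(2)[OF fin])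
    also have "\<dots> \<le> max 1 (card (verts G)) * (card (arcs G) + 1)^n" by (intro mult_right_mono) auto
    finally show ?thesis .
  qed
  have I: "pmv.subspace ({0} :: (('v, 'e) path \<Rightarrow>\<^sub>0 'k) set)"
    using pmv.subspace_span[of "{}"] by simp
  have C: "pmv.subspace (KE_carrier G :: (('v, 'e) path \<Rightarrow>\<^sub>0 'k) set)"
    by (simp add: KE_carrier_def)
  have closed: "KE_mult G x y \<in> KE_carrier G" for x y :: "('v, 'e) path \<Rightarrow>\<^sub>0 'k"
    unfolding KE_mult_def KE_carrier_def by (rule pm_mult_in_span) (auto intro: is_path_cat)
  have F1C: "KE_filt G 1 \<subseteq> (KE_carrier G :: (('v, 'e) path \<Rightarrow>\<^sub>0 'k) set)"
    unfolding KE_filt_def KE_carrier_def by (rule pmv.span_mono) blast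
  have prodsC: "prods_upto (KE_mult G) (KE_filt G 1) n \<subseteq> (KE_carrier G :: (('v, 'e) path \<Rightarrow>\<^sub>0 'k) set)" for n
    by (rule prods_closed[OF closed F1C])
  have Fn: "KE_filt G n \<subseteq> plusM (prods_upto (KE_mult G) (KE_filt G 1) n) ({0} :: (('v, 'e) path \<Rightarrow>\<^sub>0 'k) set)"
    if n1: "n \<ge> 1" for n
  proof -
    let ?P = "prods_upto (KE_mult G) (KE_filt G 1) n :: (('v, 'e) path \<Rightarrow>\<^sub>0 'k) set"
    have "X n \<subseteq> pspan ?P"
    proof
      fix x assume "x \<in> X n"
      then obtain v es where p: "x = Poly_Mapping.single (v, es) 1" "is_path G (v, es)" "length es \<le> n"
        by (auto simp: X_def path_len_def)
      show "x \<in> pspan ?P"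
      proof (rule pmv.span_base)
        show "x \<in> ?P"
        proof (cases es)
          case Nil
          have "x \<in> {Poly_Mapping.single p 1 | p. is_path G p \<and> path_len p \<le> 1}"
            using p Nil unfolding path_len_def by (intro CollectI exI[of _ "(v, [])"]) simp
          then have "x \<in> KE_filt G 1" unfolding KE_filt_def by (rule pmv.span_base)
          then show ?thesis using n1 unfolding prods_upto_def
            by (intro CollectI exI[of _ "[x]"]) simp
        next
          case (Cons e es')
          let ?xs = "map (\<lambda>e. Poly_Mapping.single (tail G e, [e]) (1::'k)) es"
          have e: "e \<in> arcs G" "tail G e = v" "edges_chain G (head G e) es'"
            using p Cons by (auto simp: is_path_def)
          have "foldl (KE_mult G) (hd ?xs) (tl ?xs) = Poly_Mapping.single (v, [e] @ es') 1"
            using Cons e p(2) KE_fold[OF wf_digraph_axioms, of v "[e]" es']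
            by (simp add: is_path_def path_end_def)
          moreover have "set ?xs \<subseteq> KE_filt G 1"
            using p Cons edges_chain_arcs[of G v es] edge_in_F1[OF wf_digraph_axioms]
            by (auto simp: is_path_def)
          ultimately show ?thesis using p Cons unfolding prods_upto_def
            by (intro CollectI exI[of _ ?xs]) auto
        qed
      qed
    qed
    then have "KE_filt G n \<subseteq> pspan ?P" unfolding XF by (rule pmv.span_minimal) simp
    moreover have "pspan ?P \<subseteq> plusM ?P {0}" by force
    ultimately show ?thesis by (rule order_trans)
  qed
  show ?thesis unfolding path_alg_type_def
    by (rule main_generic[OF I C XF Xfin Xcard _ _ prodsC Fn]) auto
qed

lemma FA_mult_wd: "FA_mult (wd a) (wd b) = (wd (a @ b) :: (('v,'e) gen list \<Rightarrow>\<^sub>0 'k::field))"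
  by (simp add: FA_mult_def wd_def pm_mult_single)

lemma FA_fold: "foldl FA_mult (wd a) (map wd ws) = (wd (a @ concat ws) :: (('v,'e) gen list \<Rightarrow>\<^sub>0 'k::field))"
  by (induction ws arbitrary: a) (simp_all add: FA_mult_wd)

lemma prods_wd:
  assumes "ws \<noteq> []" "length ws \<le> n" "\<And>w. w \<in> set ws \<Longrightarrow> (wd w :: (('v,'e) gen list \<Rightarrow>\<^sub>0 'k::field)) \<in> V"
  shows "(wd (concat ws) :: (('v,'e) gen list \<Rightarrow>\<^sub>0 'k::field)) \<in> prods_upto FA_mult V n"
proof -
  obtain w1 ws' where ws: "ws = w1 # ws'" using assms(1) by (cases ws) auto
  have "foldl FA_mult (hd (map wd ws)) (tl (map wd ws)) = (wd (concat ws) :: (('v,'e) gen list \<Rightarrow>\<^sub>0 'k))"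
    using ws by (simp add: FA_fold)
  then show ?thesis unfolding prods_upto_def using assms
    by (intro CollectI exI[of _ "map wd ws"]) auto
qed

definition vw :: "('v,'e) pre_digraph \<Rightarrow> ('v,'e) gen list \<Rightarrow> bool" where
  "vw G u \<longleftrightarrow> (\<forall>g\<in>set u. valid_gen G g)"

lemma vw_append[simp]: "vw G (u @ w) \<longleftrightarrow> vw G u \<and> vw G w"
  by (auto simp: vw_def)

lemma vw_Cons[simp]: "vw G (g # w) \<longleftrightarrow> valid_gen G g \<and> vw G w"
  by (auto simp: vw_def)

lemma vw_Nil[simp]: "vw G []"
  by (auto simp: vw_def)

lemma rel_in_I:
  assumes "vw G u" "vw G w" "wd x - wd y \<in> (LPA_rels G :: (('v,'e) gen list \<Rightarrow>\<^sub>0 'k::field) set)"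
  shows "wd (u @ x @ w) - wd (u @ y @ w) \<in> (LPA_ideal G :: (('v,'e) gen list \<Rightarrow>\<^sub>0 'k::field) set)"
proof -
  have "FA_mult (FA_mult (wd u) (wd x - wd y)) (wd w) \<in> (LPA_ideal G :: (('v,'e) gen list \<Rightarrow>\<^sub>0 'k) set)"
    unfolding LPA_ideal_def
  proof (rule pmv.span_base)
    show "FA_mult (FA_mult (wd u) (wd x - wd y)) (wd w) \<in> {FA_mult (FA_mult (wd u) r) (wd w) | u r w.
      (\<forall>g\<in>set u. valid_gen G g) \<and> (\<forall>g\<in>set w. valid_gen G g) \<and> r \<in> (LPA_rels G :: (('v,'e) gen list \<Rightarrow>\<^sub>0 'k) set)}"
      apply (rule CollectI, rule exI[of _ u], rule exI[of _ "wd x - wd y"], rule exI[of _ w])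
      using assms unfolding vw_def by simp
  qed
  moreover have "FA_mult (FA_mult (wd u) (wd x - wd y)) (wd w) = (wd (u @ x @ w) - wd (u @ y @ w) :: (('v,'e) gen list \<Rightarrow>\<^sub>0 'k))"
  proof -
    have "FA_mult (FA_mult (wd u) (wd x - wd y)) (wd w) = FA_mult (FA_mult (wd u) (wd x) - FA_mult (wd u) (wd y)) (wd w)"
      by (simp only: FA_mult_def pm_mult_diff_right)
    also have "\<dots> = FA_mult (FA_mult (wd u) (wd x)) (wd w) - FA_mult (FA_mult (wd u) (wd y)) (wd w)"
      by (simp only: FA_mult_def pm_mult_diff_left)
    also have "\<dots> = (wd (u @ x @ w) - wd (u @ y @ w) :: (('v,'e) gen list \<Rightarrow>\<^sub>0 'k))"
      by (simp add: FA_mult_wd)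
    finally show ?thesis .
  qed
  ultimately show ?thesis by simp
qed

lemma subspace_I: "pmv.subspace (LPA_ideal G :: (('v,'e) gen list \<Rightarrow>\<^sub>0 'k::field) set)"
  by (simp add: LPA_ideal_def)

lemma R1:
  assumes "wf_digraph G" "vw G u" "vw G w" "e \<in> arcs G"
  shows "wd (u @ [GE e, GV (head G e)] @ w) - wd (u @ [GE e] @ w) \<in> (LPA_ideal G :: (('v,'e) gen list \<Rightarrow>\<^sub>0 'k::field) set)"
proof -
  have "wd [GE e, GV (head G e)] - wd [GE e] \<in> (LPA_rels G :: (('v,'e) gen list \<Rightarrow>\<^sub>0 'k) set)"
    unfolding LPA_rels_def
    apply (rule UnI1, rule UnI1, rule UnI1, rule UnI1, rule UnI2)
    using assms(4) by blast
  from rel_in_I[OF assms(2,3) this] show ?thesis by simp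
qed

lemma R2:
  assumes "wf_digraph G" "vw G u" "vw G w" "f \<in> arcs G"
  shows "wd (u @ [GV (head G f), GG f] @ w) - wd (u @ [GG f] @ w) \<in> (LPA_ideal G :: (('v,'e) gen list \<Rightarrow>\<^sub>0 'k::field) set)"
proof -
  have "wd [GV (head G f), GG f] - wd [GG f] \<in> (LPA_rels G :: (('v,'e) gen list \<Rightarrow>\<^sub>0 'k) set)"
    unfolding LPA_rels_def
    apply (rule UnI1, rule UnI1, rule UnI1, rule UnI2)
    using assms(4) by blast
  from rel_in_I[OF assms(2,3) this] show ?thesis by simp
qed

definition Pw :: "('v,'e) pre_digraph \<Rightarrow> 'e list \<Rightarrow> ('v,'e) gen list" where
  "Pw G es = concat (map (\<lambda>e. [GE e, GV (head G e)]) es)"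

definition Qw :: "('v,'e) pre_digraph \<Rightarrow> 'e list \<Rightarrow> ('v,'e) gen list" where
  "Qw G fs = concat (map (\<lambda>f. [GV (head G f), GG f]) fs)"

lemma vw_Pw: "wf_digraph G \<Longrightarrow> set es \<subseteq> arcs G \<Longrightarrow> vw G (Pw G es)"
  by (induction es) (auto simp: Pw_def valid_gen_def wf_digraph.head_in_verts)

lemma vw_map_GE: "set es \<subseteq> arcs G \<Longrightarrow> vw G (map GE es)"
  by (auto simp: vw_def valid_gen_def)

lemma vw_map_GG: "set es \<subseteq> arcs G \<Longrightarrow> vw G (map GG es)"
  by (auto simp: vw_def valid_gen_def)

lemma P_cong:
  assumes wf: "wf_digraph G"
  shows "set es \<subseteq> arcs G \<Longrightarrow> vw G u \<Longrightarrow> vw G w \<Longrightarrow>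
    wd (u @ Pw G es @ w) - wd (u @ map GE es @ w) \<in> (LPA_ideal G :: (('v,'e) gen list \<Rightarrow>\<^sub>0 'k::field) set)"
proof (induction es arbitrary: u)
  case Nil then show ?case using pmv.subspace_0[OF subspace_I] by (simp add: Pw_def Qw_def)
next
  case (Cons e es)
  have e: "e \<in> arcs G" "set es \<subseteq> arcs G" using Cons.prems by auto
  have a: "wd (u @ [GE e, GV (head G e)] @ (Pw G es @ w)) - wd (u @ [GE e] @ (Pw G es @ w))
     \<in> (LPA_ideal G :: (('v,'e) gen list \<Rightarrow>\<^sub>0 'k) set)"
    by (rule R1[OF wf Cons.prems(2) _ e(1)]) (use vw_Pw[OF wf e(2)] Cons.prems in simp)
  have u': "vw G (u @ [GE e])" using Cons.prems e by (simp add: valid_gen_def)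
  have b: "wd ((u @ [GE e]) @ Pw G es @ w) - wd ((u @ [GE e]) @ map GE es @ w)
     \<in> (LPA_ideal G :: (('v,'e) gen list \<Rightarrow>\<^sub>0 'k) set)"
    by (rule Cons.IH[OF e(2) u' Cons.prems(3)])
  have "(wd (u @ [GE e, GV (head G e)] @ (Pw G es @ w)) - wd (u @ [GE e] @ (Pw G es @ w))) +
        (wd ((u @ [GE e]) @ Pw G es @ w) - wd ((u @ [GE e]) @ map GE es @ w))
     \<in> (LPA_ideal G :: (('v,'e) gen list \<Rightarrow>\<^sub>0 'k) set)"
    by (rule pmv.subspace_add[OF subspace_I a b])
  then show ?case by (simp add: Pw_def)
qed

lemma Q_cong:
  assumes wf: "wf_digraph G"
  shows "set fs \<subseteq> arcs G \<Longrightarrow> vw G u \<Longrightarrow> vw G w \<Longrightarrow>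
    wd (u @ Qw G fs @ w) - wd (u @ map GG fs @ w) \<in> (LPA_ideal G :: (('v,'e) gen list \<Rightarrow>\<^sub>0 'k::field) set)"
proof (induction fs arbitrary: u)
  case Nil then show ?case using pmv.subspace_0[OF subspace_I] by (simp add: Pw_def Qw_def)
next
  case (Cons f fs)
  have f: "f \<in> arcs G" "set fs \<subseteq> arcs G" using Cons.prems by auto
  have vQ: "vw G (Qw G fs)" using f(2) wf
    by (induction fs) (auto simp: Qw_def valid_gen_def wf_digraph.head_in_verts)
  have a: "wd (u @ [GV (head G f), GG f] @ (Qw G fs @ w)) - wd (u @ [GG f] @ (Qw G fs @ w))
     \<in> (LPA_ideal G :: (('v,'e) gen list \<Rightarrow>\<^sub>0 'k) set)"
    by (rule R2[OF wf Cons.prems(2) _ f(1)]) (use vQ Cons.prems in simp)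
  have u': "vw G (u @ [GG f])" using Cons.prems f by (simp add: valid_gen_def)
  have b: "wd ((u @ [GG f]) @ Qw G fs @ w) - wd ((u @ [GG f]) @ map GG fs @ w)
     \<in> (LPA_ideal G :: (('v,'e) gen list \<Rightarrow>\<^sub>0 'k) set)"
    by (rule Cons.IH[OF f(2) u' Cons.prems(3)])
  have "(wd (u @ [GV (head G f), GG f] @ (Qw G fs @ w)) - wd (u @ [GG f] @ (Qw G fs @ w))) +
        (wd ((u @ [GG f]) @ Qw G fs @ w) - wd ((u @ [GG f]) @ map GG fs @ w))
     \<in> (LPA_ideal G :: (('v,'e) gen list \<Rightarrow>\<^sub>0 'k) set)"
    by (rule pmv.subspace_add[OF subspace_I a b])
  then show ?case by (simp add: Qw_def)
qed

lemma vw_Qw: "wf_digraph G \<Longrightarrow> set fs \<subseteq> arcs G \<Longrightarrow> vw G (Qw G fs)"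
  by (induction fs) (auto simp: Qw_def valid_gen_def wf_digraph.head_in_verts)

lemma path_word_valid: "is_path G p \<Longrightarrow> vw G (path_word p) \<and> path_word p \<noteq> []"
  by (cases p) (auto simp: path_word_def is_path_def vw_def valid_gen_def dest!: edges_chain_arcs)

lemma ghost_word_valid: "is_path G p \<Longrightarrow> vw G (ghost_word p) \<and> ghost_word p \<noteq> []"
  by (cases p) (auto simp: ghost_word_def is_path_def vw_def valid_gen_def dest!: edges_chain_arcs)

lemma cong_to_plusM:
  fixes I V :: "(('v,'e) gen list \<Rightarrow>\<^sub>0 'k::field) set"
  assumes I: "pmv.subspace I" and ws: "ws \<noteq> []" "length ws \<le> n" "\<And>w. w \<in> set ws \<Longrightarrow> wd w \<in> V"
    and c: "wd (concat ws) - wd T \<in> I"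
  shows "wd T \<in> plusM (prods_upto FA_mult V n) I"
proof -
  have a: "wd (concat ws) \<in> pspan (prods_upto FA_mult V n)"
    by (rule pmv.span_base, rule prods_wd[OF ws])
  have b: "- (wd (concat ws) - wd T) \<in> I" by (rule pmv.subspace_neg[OF I c])
  have "wd T = wd (concat ws) + (- (wd (concat ws) - wd T))" by simp
  then show ?thesis using a b by blast
qed

lemma LPA_gen_F1:
  assumes "is_path G p" "is_path G q" "path_len p + path_len q \<le> 1"
  shows "(wd (path_word p @ ghost_word q) :: (('v,'e) gen list \<Rightarrow>\<^sub>0 'k::field)) \<in> LPA_filt G 1"
proof -
  have "(wd (path_word p @ ghost_word q) :: (('v,'e) gen list \<Rightarrow>\<^sub>0 'k)) \<in> {FA_mult (wd (path_word p)) (wd (ghost_word q)) | p q.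
      is_path G p \<and> is_path G q \<and> path_len p + path_len q \<le> 1}"
    apply (rule CollectI, rule exI[of _ p], rule exI[of _ q])
    using assms by (simp add: FA_mult_wd)
  then show ?thesis unfolding LPA_filt_def by (rule pmv.span_base)
qed

lemma F1a:
  assumes "wf_digraph G" "e \<in> arcs G" "x \<in> verts G"
  shows "(wd [GE e, GV x] :: (('v,'e) gen list \<Rightarrow>\<^sub>0 'k::field)) \<in> LPA_filt G 1"
  using LPA_gen_F1[of G "(tail G e, [e])" "(x, [])"] assms
  by (simp add: is_path_def path_len_def path_word_def ghost_word_def wf_digraph.tail_in_verts)

lemma F1b:
  assumes "wf_digraph G" "f \<in> arcs G" "x \<in> verts G"
  shows "(wd [GV x, GG f] :: (('v,'e) gen list \<Rightarrow>\<^sub>0 'k::field)) \<in> LPA_filt G 1"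
  using LPA_gen_F1[of G "(x, [])" "(tail G f, [f])"] assms
  by (simp add: is_path_def path_len_def path_word_def ghost_word_def wf_digraph.tail_in_verts)

lemma LPA_gen_plusM:
  assumes wf: "wf_digraph G" and p: "is_path G (v, es)" and q: "is_path G (w0, fs)"
    and len: "length es + length fs \<le> n" and n1: "n \<ge> 1"
  shows "(wd (path_word (v, es) @ ghost_word (w0, fs)) :: (('v,'e) gen list \<Rightarrow>\<^sub>0 'k::field))
     \<in> plusM (prods_upto FA_mult (LPA_filt G 1) n) (LPA_ideal G)"
proof -
  let ?I = "LPA_ideal G :: (('v,'e) gen list \<Rightarrow>\<^sub>0 'k) set"
  let ?V = "LPA_filt G 1 :: (('v,'e) gen list \<Rightarrow>\<^sub>0 'k) set"
  have I: "pmv.subspace ?I" by (rule subspace_I)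
  have esA: "set es \<subseteq> arcs G" and v: "v \<in> verts G" using p by (auto simp: is_path_def dest: edges_chain_arcs)
  have fsA: "set fs \<subseteq> arcs G" and w0: "w0 \<in> verts G" using q by (auto simp: is_path_def dest: edges_chain_arcs)
  have hv: "\<And>e. e \<in> arcs G \<Longrightarrow> head G e \<in> verts G" using wf by (simp add: wf_digraph.head_in_verts)
  show ?thesis
  proof (cases "es = []")
    case esN: True
    show ?thesis
    proof (cases "fs = []")
      case True
      let ?T = "path_word (v, es) @ ghost_word (w0, fs)"
      have "wd ?T \<in> ?V" using LPA_gen_F1[OF p q] esN True by (simp add: path_len_def)
      then show ?thesis
        using cong_to_plusM[OF I, of "[?T]" n ?V ?T] n1 pmv.subspace_0[OF I] by simp
    next
      case False
      obtain fb rest where r: "rev fs = fb # rest" using False by (cases "rev fs") auto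
      have fbA: "fb \<in> arcs G" "set rest \<subseteq> arcs G" using fsA r
        by (metis insert_subset list.set(2) set_rev)+
      let ?ws = "[GV v, GG fb] # map (\<lambda>f. [GV (head G f), GG f]) rest"
      have T: "path_word (v, es) @ ghost_word (w0, fs) = [GV v, GG fb] @ map GG rest @ []"
        using esN False r by (simp add: path_word_def ghost_word_def)
      have cc: "concat ?ws = [GV v, GG fb] @ Qw G rest @ []" by (simp add: Qw_def)
      have c: "wd (concat ?ws) - wd ([GV v, GG fb] @ map GG rest @ []) \<in> ?I"
        unfolding cc by (rule Q_cong[OF wf fbA(2)]) (use v fbA in \<open>simp_all add: valid_gen_def\<close>)
      have "length ?ws \<le> n" using len r esN by (metis length_Cons length_map length_rev add_0 list.size(3))
      moreover have "wd w \<in> ?V" if "w \<in> set ?ws" for w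
        using that F1b[OF wf] fbA v hv by auto
      ultimately show ?thesis unfolding T by (intro cong_to_plusM[OF I _ _ _ c]) auto
    qed
  next
    case esN: False
    show ?thesis
    proof (cases "fs = []")
      case True
      obtain es0 ea where r: "es = es0 @ [ea]" using esN by (cases es rule: rev_cases) auto
      have eaA: "ea \<in> arcs G" "set es0 \<subseteq> arcs G" using esA r by auto
      let ?ws = "map (\<lambda>e. [GE e, GV (head G e)]) es0 @ [[GE ea, GV w0]]"
      have T: "path_word (v, es) @ ghost_word (w0, fs) = [] @ map GE es0 @ [GE ea, GV w0]"
        using esN True r by (simp add: path_word_def ghost_word_def)
      have cc: "concat ?ws = [] @ Pw G es0 @ [GE ea, GV w0]" by (simp add: Pw_def)
      have c: "wd (concat ?ws) - wd ([] @ map GE es0 @ [GE ea, GV w0]) \<in> ?I"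
        unfolding cc by (rule P_cong[OF wf eaA(2)]) (use w0 eaA in \<open>simp_all add: valid_gen_def\<close>)
      have "length ?ws \<le> n" using len r by simp
      moreover have "wd w \<in> ?V" if "w \<in> set ?ws" for w
        using that F1a[OF wf] eaA w0 hv by auto
      ultimately show ?thesis unfolding T by (intro cong_to_plusM[OF I _ _ _ c]) auto
    next
      case fsN: False
      let ?ws = "map (\<lambda>e. [GE e, GV (head G e)]) es @ map (\<lambda>f. [GV (head G f), GG f]) (rev fs)"
      have T: "path_word (v, es) @ ghost_word (w0, fs) = map GE es @ map GG (rev fs) @ []"
        using esN fsN by (simp add: path_word_def ghost_word_def)
      have cc: "concat ?ws = [] @ Pw G es @ Qw G (rev fs)" by (simp add: Pw_def Qw_def)
      have fsA': "set (rev fs) \<subseteq> arcs G" using fsA by simp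
      have c1: "wd ([] @ Pw G es @ Qw G (rev fs)) - wd ([] @ map GE es @ Qw G (rev fs)) \<in> ?I"
        by (rule P_cong[OF wf esA]) (use vw_Qw[OF wf fsA'] in simp_all)
      have c2: "wd (map GE es @ Qw G (rev fs) @ []) - wd (map GE es @ map GG (rev fs) @ []) \<in> ?I"
        by (rule Q_cong[OF wf fsA']) (use vw_map_GE[OF esA] in simp_all)
      have c: "wd (concat ?ws) - wd (map GE es @ map GG (rev fs) @ []) \<in> ?I"
        using pmv.subspace_add[OF I c1 c2] unfolding cc by simp
      have "length ?ws \<le> n" using len by simp
      moreover have "?ws \<noteq> []" using esN by simp
      moreover have "wd w \<in> ?V" if "w \<in> set ?ws" for w
      proof -
        from that consider (a) e where "e \<in> set es" "w = [GE e, GV (head G e)]"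
          | (b) f where "f \<in> set fs" "w = [GV (head G f), GG f]" by auto
        then show ?thesis
        proof cases
          case a
          then have "e \<in> arcs G" using esA by blast
          then show ?thesis using a F1a[OF wf, of e "head G e"] hv by simp
        next
          case b
          then have "f \<in> arcs G" using fsA by blast
          then show ?thesis using b F1b[OF wf, of f "head G f"] hv by simp
        qed
      qed
      ultimately show ?thesis unfolding T by (intro cong_to_plusM[OF I _ _ _ c]) auto
    qed
  qed
qed

lemma LPA_main:
  fixes G :: "('v,'e) pre_digraph" and K :: "'k::field itself"
  assumes fin: "fin_digraph G"
  shows "exactly_one3
           (\<exists>k::nat. leavitt_type K G = (enat k, 0, 0))
           (\<exists>l::real. leavitt_type K G = (\<infinity>, ereal l, 0))
           (\<exists>m::real. leavitt_type K G = (\<infinity>, \<infinity>, ereal m))"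
proof -
  interpret fin_digraph G by fact
  have wf: "wf_digraph G" by (rule wf_digraph_axioms)
  define X where "X n = ({FA_mult (wd (path_word p)) (wd (ghost_word q)) | p q.
      is_path G p \<and> is_path G q \<and> path_len p + path_len q \<le> n} :: (('v,'e) gen list \<Rightarrow>\<^sub>0 'k) set)" for n
  define Pn where "Pn n = {p. is_path G p \<and> path_len p \<le> n}" for n
  define h where "h = (\<lambda>(p, q). FA_mult (wd (path_word p)) (wd (ghost_word q)) :: (('v,'e) gen list \<Rightarrow>\<^sub>0 'k))"
  have XF: "LPA_filt G n = pspan (X n)" for n by (simp add: LPA_filt_def X_def)
  have Xsub: "X n \<subseteq> h ` (Pn n \<times> Pn n)" for n
  proof
    fix x assume "x \<in> X n"
    then obtain p q where pq: "x = FA_mult (wd (path_word p)) (wd (ghost_word q))" "is_path G p" "is_path G q"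
       "path_len p + path_len q \<le> n" unfolding X_def by blast
    show "x \<in> h ` (Pn n \<times> Pn n)"
      by (rule image_eqI[of _ _ "(p, q)"]) (use pq in \<open>auto simp: h_def Pn_def\<close>)
  qed
  have Pfin: "finite (Pn n)" for n unfolding Pn_def by (rule paths_card(1)[OF fin])
  have Xfin: "finite (X n)" for n
    by (rule finite_subset[OF Xsub]) (simp add: Pfin)
  have Xcard: "card (X n) \<le> max 1 (card (verts G) * card (verts G)) * ((card (arcs G) + 1)^2)^n" for n
  proof -
    let ?m = "card (verts G) * (card (arcs G) + 1)^n"
    have "card (X n) \<le> card (h ` (Pn n \<times> Pn n))" by (rule card_mono) (use Xsub Pfin in auto)
    also have "\<dots> \<le> card (Pn n \<times> Pn n)" by (rule card_image_le) (simp add: Pfin)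
    also have "\<dots> = card (Pn n) * card (Pn n)" by (simp add: card_cartesian_product)
    also have "\<dots> \<le> ?m * ?m"
      using paths_card(2)[OF fin, of n] unfolding Pn_def by (intro mult_mono) auto
    also have "\<dots> = (card (verts G) * card (verts G)) * ((card (arcs G) + 1)^n * (card (arcs G) + 1)^n)"
      by (simp only: ac_simps)
    also have "\<dots> = (card (verts G) * card (verts G)) * ((card (arcs G) + 1)^2)^n"
      by (simp only: power2_eq_square power_mult_distrib)
    also have "\<dots> \<le> max 1 (card (verts G) * card (verts G)) * ((card (arcs G) + 1)^2)^n"
      by (intro mult_right_mono) auto
    finally show ?thesis .
  qed
  let ?I = "LPA_ideal G :: (('v,'e) gen list \<Rightarrow>\<^sub>0 'k) set"
  let ?C = "FA_carrier G :: (('v,'e) gen list \<Rightarrow>\<^sub>0 'k) set"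
  have I: "pmv.subspace ?I" by (rule subspace_I)
  have C: "pmv.subspace ?C" by (simp add: FA_carrier_def)
  have Ck: "x \<in> ?C \<longleftrightarrow> Poly_Mapping.keys x \<subseteq> {w. w \<noteq> [] \<and> (\<forall>g\<in>set w. valid_gen G g)}" for x
    unfolding FA_carrier_def wd_def by (rule span_keys)
  have closed: "FA_mult x y \<in> ?C" if "x \<in> ?C" "y \<in> ?C" for x y
  proof -
    have "Poly_Mapping.keys (FA_mult x y) \<subseteq> {w. w \<noteq> [] \<and> (\<forall>g\<in>set w. valid_gen G g)}"
      using keys_pm_mult[of "\<lambda>u w. Some (u @ w)" x y] that unfolding Ck FA_mult_def by fastforce
    then show ?thesis using Ck by blast
  qed
  have wdC: "wd w \<in> ?C" if "w \<noteq> []" "vw G w" for w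
    using that Ck[of "wd w"] by (simp add: wd_def vw_def)
  have FC: "LPA_filt G n \<subseteq> ?C" for n
    unfolding XF
  proof (rule pmv.span_minimal[OF _ C])
    show "X n \<subseteq> ?C"
    proof
      fix x assume "x \<in> X n"
      then obtain p q where pq: "x = FA_mult (wd (path_word p)) (wd (ghost_word q))" "is_path G p" "is_path G q"
        unfolding X_def by blast
      then show "x \<in> ?C" using path_word_valid[OF pq(2)] ghost_word_valid[OF pq(3)]
        by (simp add: FA_mult_wd wdC)
    qed
  qed
  have prodsC: "prods_upto FA_mult (LPA_filt G 1) n \<subseteq> ?C" for n
    by (rule prods_closed[OF closed FC])
  have Fn: "LPA_filt G n \<subseteq> plusM (prods_upto FA_mult (LPA_filt G 1) n) ?I" if n1: "n \<ge> 1" for n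
    unfolding XF[of n]
  proof (rule pmv.span_minimal)
    show "pmv.subspace (plusM (prods_upto FA_mult (LPA_filt G 1) n) ?I)"
      using pmv.subspace_sums[OF pmv.subspace_span I] by simp
    show "X n \<subseteq> plusM (prods_upto FA_mult (LPA_filt G 1) n) ?I"
    proof
      fix x assume "x \<in> X n"
      then obtain v es w0 fs where pq: "x = FA_mult (wd (path_word (v, es))) (wd (ghost_word (w0, fs)))"
        "is_path G (v, es)" "is_path G (w0, fs)" "length es + length fs \<le> n"
        unfolding X_def path_len_def by force
      show "x \<in> plusM (prods_upto FA_mult (LPA_filt G 1) n) ?I"
        unfolding pq(1) FA_mult_wd by (rule LPA_gen_plusM[OF wf pq(2,3,4) n1])
    qed
  qed
  show ?thesis unfolding leavitt_type_def
    by (rule main_generic[OF I C XF Xfin Xcard _ _ prodsC Fn]) auto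
qed

theorem corollary5p17:
  fixes E :: "('v,'e) pre_digraph" and K :: "'k::field itself"
    and t :: "enat \<times> ereal \<times> ereal"
  assumes "fin_digraph E"
    and "t = path_alg_type K E \<or> t = leavitt_type K E"
  shows "exactly_one3
           (\<exists>k::nat. t = (enat k, 0, 0))
           (\<exists>l::real. t = (\<infinity>, ereal l, 0))
           (\<exists>m::real. t = (\<infinity>, \<infinity>, ereal m))"
proof (cases "t = path_alg_type K E")
  case True
  then show ?thesis using KE_main[OF assms(1), of K] by simp
next
  case False
  then have "t = leavitt_type K E" using assms(2) by simp
  then show ?thesis using LPA_main[OF assms(1), of K] by simp
qed

end
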